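(* Consider a Gaussian relay network on a finite directed acyclic graph with a source node $S$, a destination node $D$ and relay nodes, as described in the context. Suppose the source transmits a zero-mean signal $x_S$ with $E[x_S^2]\le P_S^{Up}$, independent of all noises, and each relay node $k$ transmits $x_k=\beta_k y_k$ with a real amplification gain $\beta_k$ satisfying $$\beta_k^2\le \frac{P_k^{Up}}{(1+\delta_k)P_{R,k}}.$$ Then every relay node $k$ satisfies its power constraint $E[x_k^2]\le P_k^{Up}$.
   Context: Each non-source node $k$ has a set $\mathcal V(k)$ of in-neighbours (nodes with an edge into $k$) and receives $y_k=\sum_{j\in\mathcal V(k)}h_{j,k}x_j+z_k$, where the channel gains $h_{j,k}$ are fixed positive real constants, $x_j$ is the signal transmitted by node $j$, and the noises $z_k\sim\mathcal N(0,1)$ are independent across nodes and independent of $x_S$. Relays operate instantaneously (amplify-and-forward without delay). Every node $j$ (source or relay) has a transmit-power bound $P_j^{Up}>0$. For each non-source node $k$ with $\mathcal V(k)\neq\emptyset$ define $P_{R,k}=\big(\sum_{j\in\mathcal V(k)}h_{j,k}\sqrt{P_j^{Up}}\big)^2$ and $\delta_k=1/P_{R,k}$. *)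

theory Defs
  imports "HOL-Probability.Probability"
begin

definition in_nbrs :: "('a \<times> 'a) set \<Rightarrow> 'a \<Rightarrow> 'a set" where
  "in_nbrs E k = {j. (j, k) \<in> E}"

definition P_R :: "('a \<times> 'a) set \<Rightarrow> ('a \<Rightarrow> 'a \<Rightarrow> real) \<Rightarrow> ('a \<Rightarrow> real) \<Rightarrow> 'a \<Rightarrow> real" where
  "P_R E h Pup k = (\<Sum>j\<in>in_nbrs E k. h j k * sqrt (Pup j))\<^sup>2"

definition delta :: "('a \<times> 'a) set \<Rightarrow> ('a \<Rightarrow> 'a \<Rightarrow> real) \<Rightarrow> ('a \<Rightarrow> real) \<Rightarrow> 'a \<Rightarrow> real" where
  "delta E h Pup k = 1 / P_R E h Pup k"

end

theory Submission imports Defs begin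

context prob_space begin

definition sqi :: "('a \<Rightarrow> real) \<Rightarrow> bool" where
  "sqi f \<longleftrightarrow> f \<in> borel_measurable M \<and> integrable M (\<lambda>\<omega>. (f \<omega>)\<^sup>2)"

lemma sqi_prod_int: assumes "sqi f" "sqi g" shows "integrable M (\<lambda>\<omega>. f \<omega> * g \<omega>)"
proof (rule Bochner_Integration.integrable_bound[where f="\<lambda>\<omega>. (f \<omega>)\<^sup>2 + (g \<omega>)\<^sup>2"])
  show "integrable M (\<lambda>\<omega>. (f \<omega>)\<^sup>2 + (g \<omega>)\<^sup>2)" using assms by (auto simp: sqi_def)
  show "(\<lambda>\<omega>. f \<omega> * g \<omega>) \<in> borel_measurable M" using assms by (auto simp: sqi_def)
  show "AE x in M. norm (f x * g x) \<le> norm ((f x)\<^sup>2 + (g x)\<^sup>2)"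
  proof (intro AE_I2)
    fix x
    have "2 * \<bar>f x\<bar> * \<bar>g x\<bar> \<le> \<bar>f x\<bar>\<^sup>2 + \<bar>g x\<bar>\<^sup>2" by (rule sum_squares_bound)
    moreover have "\<bar>f x\<bar> * \<bar>g x\<bar> \<ge> 0" by simp
    moreover have "\<bar>f x * g x\<bar> = \<bar>f x\<bar> * \<bar>g x\<bar>" by (simp add: abs_mult)
    ultimately have "\<bar>f x * g x\<bar> \<le> (f x)\<^sup>2 + (g x)\<^sup>2" by simp
    then show "norm (f x * g x) \<le> norm ((f x)\<^sup>2 + (g x)\<^sup>2)" by simp
  qed
qed

lemma sqi_const: "sqi (\<lambda>_. c)" by (simp add: sqi_def)

lemma sqi_int: "sqi f \<Longrightarrow> integrable M f"
  using sqi_prod_int[of f "\<lambda>_. 1"] sqi_const by simp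

lemma sqi_add: assumes "sqi f" "sqi g" shows "sqi (\<lambda>\<omega>. f \<omega> + g \<omega>)"
proof -
  have "(\<lambda>\<omega>. (f \<omega> + g \<omega>)\<^sup>2) = (\<lambda>\<omega>. (f \<omega>)\<^sup>2 + 2 * (f \<omega> * g \<omega>) + (g \<omega>)\<^sup>2)"
    by (simp add: power2_sum algebra_simps)
  then show ?thesis using assms sqi_prod_int[OF assms] by (auto simp: sqi_def)
qed

lemma sqi_scale: assumes "sqi f" shows "sqi (\<lambda>\<omega>. c * f \<omega>)"
proof -
  have "(\<lambda>\<omega>. (c * f \<omega>)\<^sup>2) = (\<lambda>\<omega>. c\<^sup>2 * (f \<omega>)\<^sup>2)" by (simp add: power_mult_distrib)
  then show ?thesis using assms by (auto simp: sqi_def)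
qed

lemma sqi_sum: "finite A \<Longrightarrow> (\<And>j. j \<in> A \<Longrightarrow> sqi (F j)) \<Longrightarrow> sqi (\<lambda>\<omega>. \<Sum>j\<in>A. F j \<omega>)"
  by (induction A rule: finite_induct) (auto intro!: sqi_add simp: sqi_const)

lemma sq_expand:
  assumes "sqi f" "sqi g"
  shows "expectation (\<lambda>\<omega>. (s * f \<omega> + g \<omega>)\<^sup>2) =
     s\<^sup>2 * expectation (\<lambda>\<omega>. (f \<omega>)\<^sup>2) + 2 * s * expectation (\<lambda>\<omega>. f \<omega> * g \<omega>) + expectation (\<lambda>\<omega>. (g \<omega>)\<^sup>2)"
proof -
  have "(\<lambda>\<omega>. (s * f \<omega> + g \<omega>)\<^sup>2) = (\<lambda>\<omega>. s\<^sup>2 * (f \<omega>)\<^sup>2 + (2 * s) * (f \<omega> * g \<omega>) + (g \<omega>)\<^sup>2)"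
    by (simp add: power2_sum power_mult_distrib algebra_simps)
  then show ?thesis using assms sqi_prod_int[OF assms] by (simp add: sqi_def)
qed

lemma CS:
  assumes "sqi f" "sqi g"
  shows "expectation (\<lambda>\<omega>. f \<omega> * g \<omega>) \<le> sqrt (expectation (\<lambda>\<omega>. (f \<omega>)\<^sup>2)) * sqrt (expectation (\<lambda>\<omega>. (g \<omega>)\<^sup>2))"
proof -
  define A where "A = expectation (\<lambda>\<omega>. (f \<omega>)\<^sup>2)"
  define B where "B = expectation (\<lambda>\<omega>. (g \<omega>)\<^sup>2)"
  define C where "C = expectation (\<lambda>\<omega>. f \<omega> * g \<omega>)"
  have q: "s\<^sup>2 * A + 2 * s * C + B \<ge> 0" for s
  proof -
    have "expectation (\<lambda>\<omega>. (s * f \<omega> + g \<omega>)\<^sup>2) \<ge> 0" by simp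
    then show ?thesis using sq_expand[OF assms, of s] by (simp add: A_def B_def C_def)
  qed
  have A0: "A \<ge> 0" unfolding A_def by simp
  have B0: "B \<ge> 0" unfolding B_def by simp
  have "C\<^sup>2 \<le> A * B"
  proof (cases "A = 0")
    case True
    show ?thesis
    proof (rule ccontr)
      assume "\<not> ?thesis"
      then have "C \<noteq> 0" using True by auto
      then show False using q[of "- (B + 1) / (2 * C)"] True by (simp add: field_simps)
    qed
  next
    case False
    then have "A > 0" using A0 by simp
    have "(- C / A)\<^sup>2 * A + 2 * (- C / A) * C + B \<ge> 0" by (rule q)
    then have "B - C\<^sup>2 / A \<ge> 0" using \<open>A > 0\<close> by (simp add: power2_eq_square field_simps)
    then show ?thesis using \<open>A > 0\<close> by (simp add: field_simps)
  qed
  then have "sqrt (C\<^sup>2) \<le> sqrt (A * B)" by (rule real_sqrt_le_mono)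
  then have "C \<le> sqrt A * sqrt B" by (simp add: real_sqrt_mult)
  then show ?thesis by (simp add: A_def B_def C_def)
qed

lemma minkowski:
  assumes "sqi f" "sqi g"
  shows "sqrt (expectation (\<lambda>\<omega>. (f \<omega> + g \<omega>)\<^sup>2)) \<le> sqrt (expectation (\<lambda>\<omega>. (f \<omega>)\<^sup>2)) + sqrt (expectation (\<lambda>\<omega>. (g \<omega>)\<^sup>2))"
proof -
  define a where "a = sqrt (expectation (\<lambda>\<omega>. (f \<omega>)\<^sup>2))"
  define b where "b = sqrt (expectation (\<lambda>\<omega>. (g \<omega>)\<^sup>2))"
  have a0: "a \<ge> 0" "b \<ge> 0" by (simp_all add: a_def b_def)
  have "expectation (\<lambda>\<omega>. (f \<omega> + g \<omega>)\<^sup>2) = a\<^sup>2 + 2 * expectation (\<lambda>\<omega>. f \<omega> * g \<omega>) + b\<^sup>2"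
    using sq_expand[OF assms, of 1] by (simp add: a_def b_def)
  also have "\<dots> \<le> a\<^sup>2 + 2 * (a * b) + b\<^sup>2" using CS[OF assms] by (simp add: a_def b_def)
  also have "\<dots> = (a + b)\<^sup>2" by (simp add: power2_sum)
  finally have "sqrt (expectation (\<lambda>\<omega>. (f \<omega> + g \<omega>)\<^sup>2)) \<le> sqrt ((a+b)\<^sup>2)" by (rule real_sqrt_le_mono)
  then show ?thesis using a0 by (simp add: a_def b_def)
qed

lemma minkowski_sum:
  "finite A \<Longrightarrow> (\<And>j. j \<in> A \<Longrightarrow> sqi (F j)) \<Longrightarrow>
   sqrt (expectation (\<lambda>\<omega>. (\<Sum>j\<in>A. F j \<omega>)\<^sup>2)) \<le> (\<Sum>j\<in>A. sqrt (expectation (\<lambda>\<omega>. (F j \<omega>)\<^sup>2)))"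
proof (induction A rule: finite_induct)
  case empty then show ?case by simp
next
  case (insert a A)
  have "sqrt (expectation (\<lambda>\<omega>. (F a \<omega> + (\<Sum>j\<in>A. F j \<omega>))\<^sup>2)) \<le>
      sqrt (expectation (\<lambda>\<omega>. (F a \<omega>)\<^sup>2)) + sqrt (expectation (\<lambda>\<omega>. (\<Sum>j\<in>A. F j \<omega>)\<^sup>2))"
    using insert by (intro minkowski sqi_sum) auto
  with insert show ?case by simp
qed

lemma std_normal_facts:
  assumes D: "distributed M lborel Z (\<lambda>t. ennreal (normal_density 0 1 t))"
  shows "sqi Z" "expectation Z = 0" "expectation (\<lambda>\<omega>. (Z \<omega>)\<^sup>2) = 1"
proof -
  have m: "Z \<in> borel_measurable M" using distributed_measurable[OF D] by simp
  have nn: "\<And>t. t \<in> space lborel \<Longrightarrow> 0 \<le> normal_density 0 1 t" by (rule normal_density_nonneg)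
  have g1: "(\<lambda>t::real. t) \<in> borel_measurable lborel" by simp
  have g2: "(\<lambda>t::real. t ^ 2) \<in> borel_measurable lborel" by simp
  have i2: "integrable lborel (\<lambda>t. normal_density 0 1 t * t ^ 2)"
    by (rule integrable_std_normal_moment)
  have "integrable M (\<lambda>\<omega>. (Z \<omega>) ^ 2)"
    using distributed_integrable[OF D g2 nn] i2 by blast
  then show "sqi Z" using m unfolding sqi_def by blast
  have e1: "(\<integral>t. normal_density 0 1 t * t \<partial>lborel) = 0"
    using integral_std_normal_moment_odd[of 0] by simp
  show "expectation Z = 0"
    using distributed_integral[OF D g1 nn] e1 by simp
  have e2: "(\<integral>t. normal_density 0 1 t * t ^ 2 \<partial>lborel) = 1"
    using integral_std_normal_moment_even[of 1] by simp
  show "expectation (\<lambda>\<omega>. (Z \<omega>)\<^sup>2) = 1"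
    using distributed_integral[OF D g2 nn] e2 by simp
qed

end
theorem lemma1:
  fixes M :: "'w measure"
    and V :: "'a set" and E :: "('a \<times> 'a) set" and S D :: 'a
    and h :: "'a \<Rightarrow> 'a \<Rightarrow> real" and Pup :: "'a \<Rightarrow> real" and \<beta> :: "'a \<Rightarrow> real"
    and x y z :: "'a \<Rightarrow> 'w \<Rightarrow> real"
  assumes prob: "prob_space M"
    and finV: "finite V" and edges: "E \<subseteq> V \<times> V" and dag: "acyclic E"
    and SV: "S \<in> V" and DV: "D \<in> V" and SD: "S \<noteq> D"
    and D_silent: "\<And>k. (D, k) \<notin> E"
    and h_pos: "\<And>j k. (j, k) \<in> E \<Longrightarrow> h j k > 0"
    and Pup_pos: "\<And>j. j \<in> V - {D} \<Longrightarrow> Pup j > 0"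
    and relay_in: "\<And>k. k \<in> V - {S, D} \<Longrightarrow> in_nbrs E k \<noteq> {}"
    and xS_meas: "x S \<in> borel_measurable M"
    and xS_sq_int: "integrable M (\<lambda>\<omega>. (x S \<omega>)\<^sup>2)"
    and xS_mean: "prob_space.expectation M (x S) = 0"
    and xS_pow: "prob_space.expectation M (\<lambda>\<omega>. (x S \<omega>)\<^sup>2) \<le> Pup S"
    and noise_dist: "\<And>k. k \<in> V - {S} \<Longrightarrow>
          distributed M lborel (z k) (\<lambda>t. ennreal (normal_density 0 1 t))"
    and indep: "prob_space.indep_vars M (\<lambda>_. borel)
          (\<lambda>i. case i of None \<Rightarrow> x S | Some k \<Rightarrow> z k) (insert None (Some ` (V - {S})))"
    and recv: "\<And>k. k \<in> V - {S} \<Longrightarrow>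
          y k = (\<lambda>\<omega>. (\<Sum>j\<in>in_nbrs E k. h j k * x j \<omega>) + z k \<omega>)"
    and relay_tx: "\<And>k. k \<in> V - {S, D} \<Longrightarrow> x k = (\<lambda>\<omega>. \<beta> k * y k \<omega>)"
    and gain: "\<And>k. k \<in> V - {S, D} \<Longrightarrow>
          (\<beta> k)\<^sup>2 \<le> Pup k / ((1 + delta E h Pup k) * P_R E h Pup k)"
  shows "\<forall>k \<in> V - {S, D}. prob_space.expectation M (\<lambda>\<omega>. (x k \<omega>)\<^sup>2) \<le> Pup k"
proof -
  interpret P: prob_space M by (rule prob)
  define X where "X = (\<lambda>i. case i of None \<Rightarrow> x S | Some k \<Rightarrow> z k)"
  define I where "I = insert None (Some ` (V - {S}))"
  define J where "J = (\<lambda>k. insert None (Some ` ({i\<in>V. (i, k) \<in> E\<^sup>*} - {S})))"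
  have indX: "P.indep_vars (\<lambda>_. borel) X I" using indep by (simp add: X_def I_def)
  have JI: "J k \<subseteq> I" for k by (auto simp: J_def I_def)
  have finE: "finite E" using finV edges by (meson finite_SigmaI finite_subset)
  have wfE: "wf E" using finE dag by (rule finite_acyclic_wf)
  have nbV: "in_nbrs E k \<subseteq> V - {D}" for k using edges D_silent by (auto simp: in_nbrs_def)
  have finN: "finite (in_nbrs E k)" for k using nbV[of k] finV by (meson finite_Diff finite_subset)
  have main: "k \<in> V - {D} \<longrightarrow> P.sqi (x k) \<and> P.expectation (\<lambda>\<omega>. (x k \<omega>)\<^sup>2) \<le> Pup k \<and>
     (\<exists>F. F \<in> borel_measurable (PiM (J k) (\<lambda>_. borel)) \<and> (\<forall>\<omega>. x k \<omega> = F (\<lambda>i\<in>J k. X i \<omega>)))" for k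
    using wfE
  proof (induction k rule: wf_induct_rule)
    case (less k)
    show ?case
    proof
      assume kV: "k \<in> V - {D}"
      show "P.sqi (x k) \<and> P.expectation (\<lambda>\<omega>. (x k \<omega>)\<^sup>2) \<le> Pup k \<and>
        (\<exists>F. F \<in> borel_measurable (PiM (J k) (\<lambda>_. borel)) \<and> (\<forall>\<omega>. x k \<omega> = F (\<lambda>i\<in>J k. X i \<omega>)))"
      proof (cases "k = S")
        case True
        have "(\<lambda>f. f None) \<in> borel_measurable (PiM (J k) (\<lambda>_. borel))"
          by (rule measurable_component_singleton) (simp add: J_def)
        moreover have "\<forall>\<omega>. x k \<omega> = (\<lambda>i\<in>J k. X i \<omega>) None"
        proof
          fix \<omega>
          have XN: "X None = x S" unfolding X_def by simp
          have NJ: "None \<in> J k" unfolding J_def by blast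
          show "x k \<omega> = (\<lambda>i\<in>J k. X i \<omega>) None" using NJ XN True by simp
        qed
        moreover have "P.sqi (x k)" using True xS_meas xS_sq_int by (simp add: P.sqi_def)
        ultimately show ?thesis using True xS_pow by blast
      next
        case False
        then have kR: "k \<in> V - {S, D}" using kV by auto
        let ?N = "in_nbrs E k"
        have IH: "P.sqi (x j) \<and> P.expectation (\<lambda>\<omega>. (x j \<omega>)\<^sup>2) \<le> Pup j \<and>
          (\<exists>F. F \<in> borel_measurable (PiM (J j) (\<lambda>_. borel)) \<and> (\<forall>\<omega>. x j \<omega> = F (\<lambda>i\<in>J j. X i \<omega>)))"
          if "j \<in> ?N" for j
        proof -
          have jE: "(j, k) \<in> E" using that by (simp add: in_nbrs_def)
          have "j \<in> V - {D}" using that nbV[of k] by blast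
          then show ?thesis using less[OF jE] by blast
        qed
        then obtain Fs where Fs: "\<And>j. j \<in> ?N \<Longrightarrow> Fs j \<in> borel_measurable (PiM (J j) (\<lambda>_. borel)) \<and>
             (\<forall>\<omega>. x j \<omega> = Fs j (\<lambda>i\<in>J j. X i \<omega>))"
          using bchoice[of ?N "\<lambda>j F. F \<in> borel_measurable (PiM (J j) (\<lambda>_. borel)) \<and>
             (\<forall>\<omega>. x j \<omega> = F (\<lambda>i\<in>J j. X i \<omega>))"] by blast
        define K where "K = J k - {Some k}"
        have JjK: "J j \<subseteq> K" if "j \<in> ?N" for j
        proof -
          have jk: "(j, k) \<in> E" using that by (simp add: in_nbrs_def)
          have "J j \<subseteq> J k" using jk by (auto simp: J_def intro: rtrancl_into_rtrancl)
          moreover have "Some k \<notin> J j"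
          proof
            assume "Some k \<in> J j"
            then have "(k, j) \<in> E\<^sup>*" by (auto simp: J_def)
            then have "(k, k) \<in> E\<^sup>+" using jk by (meson rtrancl_into_trancl1)
            then show False using dag by (simp add: acyclic_def)
          qed
          ultimately show ?thesis by (auto simp: K_def)
        qed
        define A where "A = (\<lambda>\<omega>. \<Sum>j\<in>?N. h j k * x j \<omega>)"
        define G where "G = (\<lambda>f. \<Sum>j\<in>?N. h j k * Fs j (restrict f (J j)))"
        have Gm: "G \<in> borel_measurable (PiM K (\<lambda>_. borel))"
          unfolding G_def
        proof (rule borel_measurable_sum)
          fix j assume j: "j \<in> ?N"
          have "(\<lambda>f. Fs j (restrict f (J j))) \<in> borel_measurable (PiM K (\<lambda>_. borel))"
            using measurable_comp[OF measurable_restrict_subset[OF JjK[OF j]] conjunct1[OF Fs[OF j]]]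
            by (simp add: comp_def)
          moreover have "(\<lambda>f. h j k) \<in> borel_measurable (PiM K (\<lambda>_. borel))" by simp
          ultimately show "(\<lambda>f. h j k * Fs j (restrict f (J j))) \<in> borel_measurable (PiM K (\<lambda>_. borel))"
            by (rule borel_measurable_times[rotated])
        qed
        have AG: "A \<omega> = G (\<lambda>i\<in>K. X i \<omega>)" for \<omega>
          unfolding A_def G_def
        proof (intro sum.cong refl)
          fix j assume j: "j \<in> ?N"
          have "restrict (\<lambda>i\<in>K. X i \<omega>) (J j) = (\<lambda>i\<in>J j. X i \<omega>)"
            using JjK[OF j] by (auto simp: restrict_def fun_eq_iff)
          then show "h j k * x j \<omega> = h j k * Fs j (restrict (\<lambda>i\<in>K. X i \<omega>) (J j))"
            using Fs[OF j] by simp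
        qed
        have zN: "distributed M lborel (z k) (\<lambda>t. ennreal (normal_density 0 1 t))"
          using noise_dist kR by auto
        note zf = P.std_normal_facts[OF zN]
        have sqA: "P.sqi A" unfolding A_def
          using finN IH by (intro P.sqi_sum P.sqi_scale) auto
        have ind2: "P.indep_var (PiM K (\<lambda>_. borel)) (\<lambda>\<omega>. \<lambda>i\<in>K. X i \<omega>)
              (PiM {Some k} (\<lambda>_. borel)) (\<lambda>\<omega>. \<lambda>i\<in>{Some k}. X i \<omega>)"
          using JI[of k] kR by (intro P.indep_var_restrict[OF indX]) (auto simp: K_def I_def)
        have "P.indep_var borel (G \<circ> (\<lambda>\<omega>. \<lambda>i\<in>K. X i \<omega>)) borel
              ((\<lambda>f. f (Some k)) \<circ> (\<lambda>\<omega>. \<lambda>i\<in>{Some k}. X i \<omega>))"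
          by (rule P.indep_var_compose[OF ind2 Gm]) (rule measurable_component_singleton, simp)
        moreover have "G \<circ> (\<lambda>\<omega>. \<lambda>i\<in>K. X i \<omega>) = A" using AG by (auto simp: fun_eq_iff)
        moreover have "(\<lambda>f. f (Some k)) \<circ> (\<lambda>\<omega>. \<lambda>i\<in>{Some k}. X i \<omega>) = z k"
          by (auto simp: fun_eq_iff X_def)
        ultimately have indAz: "P.indep_var borel A borel (z k)" by simp
        have EAz: "P.expectation (\<lambda>\<omega>. A \<omega> * z k \<omega>) = 0"
          using P.indep_var_lebesgue_integral[OF indAz P.sqi_int[OF sqA] P.sqi_int[OF zf(1)]] zf(2)
          by simp
        have yk: "y k = (\<lambda>\<omega>. 1 * A \<omega> + z k \<omega>)" using recv kR by (auto simp: A_def)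
        have xk: "x k = (\<lambda>\<omega>. \<beta> k * (1 * A \<omega> + z k \<omega>))" using relay_tx kR yk by auto
        have sqy: "P.sqi (\<lambda>\<omega>. 1 * A \<omega> + z k \<omega>)" using sqA zf(1) by (simp add: P.sqi_add)
        have Ey: "P.expectation (\<lambda>\<omega>. (1 * A \<omega> + z k \<omega>)\<^sup>2) = P.expectation (\<lambda>\<omega>. (A \<omega>)\<^sup>2) + 1"
          using P.sq_expand[OF sqA zf(1), of 1] EAz zf(3) by simp
        have Pj: "\<And>j. j \<in> ?N \<Longrightarrow> Pup j > 0" using nbV[of k] Pup_pos by auto
        have hj: "\<And>j. j \<in> ?N \<Longrightarrow> h j k > 0" using h_pos by (auto simp: in_nbrs_def)
        have "sqrt (P.expectation (\<lambda>\<omega>. (A \<omega>)\<^sup>2)) \<le> (\<Sum>j\<in>?N. sqrt (P.expectation (\<lambda>\<omega>. (h j k * x j \<omega>)\<^sup>2)))"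
          unfolding A_def using finN IH by (intro P.minkowski_sum P.sqi_scale) auto
        also have "\<dots> \<le> (\<Sum>j\<in>?N. h j k * sqrt (Pup j))"
        proof (rule sum_mono)
          fix j assume j: "j \<in> ?N"
          have "P.expectation (\<lambda>\<omega>. (h j k * x j \<omega>)\<^sup>2) = (h j k)\<^sup>2 * P.expectation (\<lambda>\<omega>. (x j \<omega>)\<^sup>2)"
            by (simp add: power_mult_distrib)
          then have "sqrt (P.expectation (\<lambda>\<omega>. (h j k * x j \<omega>)\<^sup>2)) = h j k * sqrt (P.expectation (\<lambda>\<omega>. (x j \<omega>)\<^sup>2))"
            using hj[OF j] by (simp add: real_sqrt_mult)
          moreover have "sqrt (P.expectation (\<lambda>\<omega>. (x j \<omega>)\<^sup>2)) \<le> sqrt (Pup j)"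
            using IH[OF j] by simp
          ultimately show "sqrt (P.expectation (\<lambda>\<omega>. (h j k * x j \<omega>)\<^sup>2)) \<le> h j k * sqrt (Pup j)"
            using hj[OF j] by (simp add: mult_left_mono)
        qed
        finally have sq: "sqrt (P.expectation (\<lambda>\<omega>. (A \<omega>)\<^sup>2)) \<le> (\<Sum>j\<in>?N. h j k * sqrt (Pup j))" .
        have EA0: "P.expectation (\<lambda>\<omega>. (A \<omega>)\<^sup>2) \<ge> 0" by simp
        have EA: "P.expectation (\<lambda>\<omega>. (A \<omega>)\<^sup>2) \<le> P_R E h Pup k"
        proof -
          have "P.expectation (\<lambda>\<omega>. (A \<omega>)\<^sup>2) = (sqrt (P.expectation (\<lambda>\<omega>. (A \<omega>)\<^sup>2)))\<^sup>2"
            using EA0 by simp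
          also have "\<dots> \<le> (\<Sum>j\<in>?N. h j k * sqrt (Pup j))\<^sup>2"
            using sq by (intro power_mono) auto
          finally show ?thesis by (simp add: P_R_def)
        qed
        have PRpos: "P_R E h Pup k > 0"
        proof -
          have "(\<Sum>j\<in>?N. h j k * sqrt (Pup j)) > 0"
            using finN relay_in[OF kR] hj Pj by (intro sum_pos) auto
          then show ?thesis by (simp add: P_R_def)
        qed
        have gk: "(\<beta> k)\<^sup>2 \<le> Pup k / (P_R E h Pup k + 1)"
        proof -
          have "(1 + delta E h Pup k) * P_R E h Pup k = P_R E h Pup k + 1"
            using PRpos by (simp add: delta_def field_simps)
          then show ?thesis using gain[OF kR] by simp
        qed
        have "P.expectation (\<lambda>\<omega>. (x k \<omega>)\<^sup>2) = (\<beta> k)\<^sup>2 * (P.expectation (\<lambda>\<omega>. (A \<omega>)\<^sup>2) + 1)"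
          using Ey by (simp add: xk power_mult_distrib)
        also have "\<dots> \<le> Pup k / (P_R E h Pup k + 1) * (P_R E h Pup k + 1)"
        proof (rule mult_mono)
          show "0 \<le> Pup k / (P_R E h Pup k + 1)" using Pup_pos[of k] kR PRpos by simp
        qed (use gk EA EA0 in auto)
        also have "\<dots> = Pup k" using PRpos by simp
        finally have Ebound: "P.expectation (\<lambda>\<omega>. (x k \<omega>)\<^sup>2) \<le> Pup k" .
        have sqx: "P.sqi (x k)" using sqy by (simp add: xk P.sqi_scale)
        have skJ: "Some k \<in> J k" using kR by (auto simp: J_def)
        have KJ: "K \<subseteq> J k" by (auto simp: K_def)
        define F where "F = (\<lambda>f. \<beta> k * (1 * G (restrict f K) + f (Some k)))"
        have "F \<in> borel_measurable (PiM (J k) (\<lambda>_. borel))"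
        proof -
          have m1: "(\<lambda>f. G (restrict f K)) \<in> borel_measurable (PiM (J k) (\<lambda>_. borel))"
            using measurable_comp[OF measurable_restrict_subset[OF KJ] Gm] by (simp add: comp_def)
          have m2: "(\<lambda>f. f (Some k)) \<in> borel_measurable (PiM (J k) (\<lambda>_. borel))"
            using measurable_component_singleton[OF skJ, of "\<lambda>_. borel"] by simp
          have m3: "(\<lambda>f. G (restrict f K) + f (Some k)) \<in> borel_measurable (PiM (J k) (\<lambda>_. borel))"
            by (rule borel_measurable_add[OF m1 m2])
          have m0: "(\<lambda>f. \<beta> k) \<in> borel_measurable (PiM (J k) (\<lambda>_. borel))" by simp
          show ?thesis unfolding F_def using borel_measurable_times[OF m0 m3] by simp
        qed
        moreover have "\<forall>\<omega>. x k \<omega> = F (\<lambda>i\<in>J k. X i \<omega>)"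
        proof
          fix \<omega>
          have Xk: "X (Some k) \<omega> = z k \<omega>" unfolding X_def by simp
          have r: "restrict (\<lambda>i\<in>J k. X i \<omega>) K = (\<lambda>i\<in>K. X i \<omega>)"
            using KJ by (auto simp: restrict_def fun_eq_iff)
          have s: "(\<lambda>i\<in>J k. X i \<omega>) (Some k) = z k \<omega>"
            using skJ Xk by simp
          have e1: "F (\<lambda>i\<in>J k. X i \<omega>) = \<beta> k * (1 * G (restrict (\<lambda>i\<in>J k. X i \<omega>) K) + (\<lambda>i\<in>J k. X i \<omega>) (Some k))"
            unfolding F_def by (rule refl)
          have e2: "x k \<omega> = \<beta> k * (1 * A \<omega> + z k \<omega>)" using xk by simp
          show "x k \<omega> = F (\<lambda>i\<in>J k. X i \<omega>)"
            unfolding e1 e2 r s AG[of \<omega>] by (rule refl)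
        qed
        ultimately show ?thesis using sqx Ebound by blast
      qed
    qed
  qed
  show ?thesis
  proof (intro ballI)
    fix k assume "k \<in> V - {S, D}"
    then have "k \<in> V - {D}" by blast
    then show "P.expectation (\<lambda>\<omega>. (x k \<omega>)\<^sup>2) \<le> Pup k" using main[of k] by blast
  qed
qed

end
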